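(* (i) The function $\phi_{-1}^{-1}(t)=-\mathfrak{W}_0(-e^{-(t+1)})$, $t\in[0,\infty)$, is completely monotone on $[0,\infty)$. (ii) The function $\phi_{-2}^{-1}(t)=t+1-\sqrt{(t+1)^2-1}$, $t\in[0,\infty)$ (the inverse of $\phi_{-2}(x)=\tfrac12(x+x^{-1}-2)$ restricted to $x\in(0,1]$), is completely monotone on $[0,\infty)$.
   Context: $\phi_{-1}(x)=x-1-\log x$ and $\phi_{-2}(x)=\frac12(x^{-1}+x-2)$ for $x>0$; each is a strictly decreasing bijection from $(0,1]$ onto $[0,\infty)$, and $\phi_\lambda^{-1}$ denotes the inverse of this restriction. $\mathfrak{W}_0$ is the principal branch of the Lambert W function. A function $h$ on an interval $I$ is completely monotone on $I$ if it has derivatives of all orders on the interior of $I$ and $(-1)^k h^{(k)}(x)\ge0$ for all $k=0,1,2,\dots$ and all $x$ in the interior of $I$. *)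

theory Defs
  imports "HOL-Analysis.Analysis"
begin

definition phi_m1 :: "real \<Rightarrow> real" where
  "phi_m1 x = x - 1 - ln x"

definition phi_m2 :: "real \<Rightarrow> real" where
  "phi_m2 x = (inverse x + x - 2) / 2"

definition phi_inv :: "(real \<Rightarrow> real) \<Rightarrow> real \<Rightarrow> real" where
  "phi_inv \<phi> t = (THE x. x \<in> {0<..1} \<and> \<phi> x = t)"

definition lambertW0 :: "real \<Rightarrow> real" where
  "lambertW0 x = (THE w. w \<ge> -1 \<and> w * exp w = x)"

definition completely_monotone_on :: "real set \<Rightarrow> (real \<Rightarrow> real) \<Rightarrow> bool" where
  "completely_monotone_on I h \<longleftrightarrow>
     (\<exists>D :: nat \<Rightarrow> real \<Rightarrow> real.
        (\<forall>x\<in>interior I. D 0 x = h x) \<and>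
        (\<forall>k. \<forall>x\<in>interior I. (D k has_real_derivative D (Suc k) x) (at x)) \<and>
        (\<forall>k. \<forall>x\<in>interior I. (-1) ^ k * D k x \<ge> 0))"

end

theory Submission
  imports Defs "HOL-Computational_Algebra.Polynomial"
begin


lemma leibniz_step:
  fixes a b :: "nat \<Rightarrow> real"
  shows "(\<Sum>j\<le>k. real (k choose j) * (a (Suc j) * b (k-j) + a j * b (Suc (k-j))))
       = (\<Sum>j\<le>Suc k. real (Suc k choose j) * a j * b (Suc k - j))"
proof -
  have R: "(\<Sum>j\<le>Suc k. real (Suc k choose j) * a j * b (Suc k - j))
     = a 0 * b (Suc k) + (\<Sum>j\<le>k. real (k choose j) * a (Suc j) * b (k - j))
        + (\<Sum>j\<le>k. real (k choose Suc j) * a (Suc j) * b (k - j))"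
    unfolding sum.atMost_Suc_shift by (simp add: sum.distrib ring_distribs)
  have L2: "(\<Sum>j\<le>k. real (k choose j) * a j * b (Suc (k-j)))
      = a 0 * b (Suc k) + (\<Sum>j\<le>k. real (k choose Suc j) * a (Suc j) * b (k - j))"
  proof (cases k)
    case 0 then show ?thesis by simp
  next
    case (Suc m)
    have "(\<Sum>j\<le>k. real (k choose j) * a j * b (Suc (k-j)))
       = a 0 * b (Suc k) + (\<Sum>j\<le>m. real (k choose Suc j) * a (Suc j) * b (k - j))"
      unfolding Suc sum.atMost_Suc_shift
      by (auto intro!: sum.cong simp del: binomial_Suc_Suc simp add: Suc_diff_le)
    also have "(\<Sum>j\<le>m. real (k choose Suc j) * a (Suc j) * b (k - j))
       = (\<Sum>j\<le>k. real (k choose Suc j) * a (Suc j) * b (k - j))"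
      unfolding Suc by (simp del: binomial_Suc_Suc)
    finally show ?thesis .
  qed
  show ?thesis using R L2
    by (simp add: sum.distrib algebra_simps)
qed

lemma leibniz_tower:
  fixes f g :: "nat \<Rightarrow> real \<Rightarrow> real"
  assumes "x \<in> S" and f: "\<And>k x. x \<in> S \<Longrightarrow> (f k has_real_derivative f (Suc k) x) (at x)"
    and g: "\<And>k x. x \<in> S \<Longrightarrow> (g k has_real_derivative g (Suc k) x) (at x)"
  shows "((\<lambda>x. \<Sum>j\<le>k. real (k choose j) * f j x * g (k-j) x) has_real_derivative
          (\<Sum>j\<le>Suc k. real (Suc k choose j) * f j x * g (Suc k - j) x)) (at x)"
proof -
  have "((\<lambda>x. \<Sum>j\<le>k. real (k choose j) * f j x * g (k-j) x) has_real_derivative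
          (\<Sum>j\<le>k. real (k choose j) * (f (Suc j) x * g (k-j) x + f j x * g (Suc (k-j)) x))) (at x)"
    apply (rule DERIV_sum)
    apply (subst mult.assoc)
    apply (rule DERIV_cmult)
    using f[OF assms(1)] g[OF assms(1)]
    by (auto intro!: derivative_eq_intros simp: algebra_simps)
  then show ?thesis using leibniz_step[of k "\<lambda>j. f j x" "\<lambda>j. g j x"] by simp
qed

lemma poly_nonneg_coeffs:
  fixes p :: "real poly"
  assumes "\<forall>n. coeff p n \<ge> 0" "x \<ge> 0"
  shows "poly p x \<ge> 0"
  using assms(1)
proof (induction p)
  case (pCons a p)
  then have "a \<ge> 0" "\<forall>n. coeff p n \<ge> 0"
    by (metis coeff_pCons_0, metis coeff_pCons_Suc)
  with pCons show ?case using assms(2) by simp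
qed simp

lemma nonneg_coeffs_mult:
  fixes p q :: "real poly"
  assumes "\<forall>n. coeff p n \<ge> 0" "\<forall>n. coeff q n \<ge> 0"
  shows "\<forall>n. coeff (p * q) n \<ge> 0"
  using assms by (auto simp: coeff_mult intro!: sum_nonneg)

lemma nonneg_coeffs_pderiv:
  fixes p :: "real poly"
  assumes "\<forall>n. coeff p n \<ge> 0"
  shows "\<forall>n. coeff (pderiv p) n \<ge> 0"
  using assms by (auto simp: coeff_pderiv)



lemma ln_strict: "0 < (z::real) \<Longrightarrow> z \<noteq> 1 \<Longrightarrow> ln z < z - 1"
  using ln_le_minus_one ln_eq_minus_one by force

lemma m1_strict:
  assumes "0 < x" "x < y" "y \<le> 1"
  shows "phi_m1 y < phi_m1 x"
proof -
  have "ln (x/y) < x/y - 1" using assms by (intro ln_strict) auto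
  hence "ln y - ln x > 1 - x/y" using assms by (simp add: ln_div)
  moreover have "1 - x/y \<ge> y - x"
  proof -
    have "1 - x/y = (y - x)/y" using assms by (simp add: field_simps)
    also have "\<dots> \<ge> (y - x)/1" using assms by (intro divide_left_mono) auto
    finally show ?thesis by simp
  qed
  ultimately show ?thesis unfolding phi_m1_def by simp
qed

lemma m1_inj: "x \<in> {0<..1} \<Longrightarrow> y \<in> {0<..1} \<Longrightarrow> phi_m1 x = phi_m1 y \<Longrightarrow> x = y"
  by (metis greaterThanAtMost_iff linorder_neqE_linordered_idom m1_strict order_less_irrefl)

lemma m1_exists:
  assumes "t \<ge> 0" shows "\<exists>x. x \<in> {0<..1} \<and> phi_m1 x = t"
proof -
  let ?a = "exp (-(t+1))"
  have a1: "?a \<le> 1" using assms by simp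
  have "phi_m1 1 \<le> t" using assms by (simp add: phi_m1_def)
  moreover have "t \<le> phi_m1 ?a" by (simp add: phi_m1_def)
  moreover have "\<forall>x. ?a \<le> x \<and> x \<le> 1 \<longrightarrow> isCont phi_m1 x"
  proof (intro allI impI)
    fix x assume "?a \<le> x \<and> x \<le> 1"
    hence "x > 0" by (meson exp_gt_zero less_le_trans)
    thus "isCont phi_m1 x" unfolding phi_m1_def by (auto intro!: continuous_intros)
  qed
  ultimately obtain x where "?a \<le> x" "x \<le> 1" "phi_m1 x = t"
    using IVT2[of phi_m1 1 t ?a] a1 by blast
  moreover have "x > 0" using \<open>?a \<le> x\<close> by (meson exp_gt_zero less_le_trans)
  ultimately show ?thesis by auto
qed

lemma m1_inv:
  assumes "t \<ge> 0"
  shows "phi_inv phi_m1 t \<in> {0<..1} \<and> phi_m1 (phi_inv phi_m1 t) = t"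
proof -
  have "\<exists>!x. x \<in> {0<..1} \<and> phi_m1 x = t"
    using m1_exists[OF assms] m1_inj by blast
  thus ?thesis unfolding phi_inv_def by (rule theI')
qed

lemma m1_nonneg: "x \<in> {0<..1} \<Longrightarrow> phi_m1 x \<ge> 0"
  using m1_strict[of x 1] by (cases "x = 1") (auto simp: phi_m1_def)

lemma m1_inv_eq: "x \<in> {0<..1} \<Longrightarrow> phi_inv phi_m1 (phi_m1 x) = x"
  using m1_inv[OF m1_nonneg] m1_inj by blast

lemma m1_inv_lt1: assumes "t > 0" shows "phi_inv phi_m1 t < 1"
proof -
  have "phi_inv phi_m1 t \<noteq> 1" using m1_inv[of t] assms by (auto simp: phi_m1_def)
  thus ?thesis using m1_inv[of t] assms by auto
qed

lemma m1_lambert: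
  assumes "t \<ge> 0"
  shows "phi_inv phi_m1 t = - lambertW0 (- exp (-(t + 1)))"
proof -
  define x where "x = phi_inv phi_m1 t"
  have x: "x \<in> {0<..1}" "phi_m1 x = t" using m1_inv[OF assms] x_def by auto
  have key: "z * exp (-z) = exp (-(t+1)) \<longleftrightarrow> phi_m1 z = t" if "z > 0" for z
  proof -
    have "z * exp (-z) = exp (ln z - z)" using that by (simp add: exp_diff exp_minus field_simps)
    hence "z * exp (-z) = exp (-(t+1)) \<longleftrightarrow> ln z - z = -(t+1)" by simp
    thus ?thesis by (auto simp: phi_m1_def)
  qed
  have "lambertW0 (- exp (-(t + 1))) = -x"
    unfolding lambertW0_def
  proof (rule the_equality)
    show "- x \<ge> -1 \<and> -x * exp (-x) = - exp (-(t + 1))"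
      using x key[of x] by auto
  next
    fix w assume w: "w \<ge> -1 \<and> w * exp w = - exp (- (t + 1))"
    have "w < 0"
    proof (rule ccontr)
      assume "\<not> w < 0"
      hence "w * exp w \<ge> 0" by simp
      thus False using w by (smt (verit) exp_gt_zero)
    qed
    have "phi_m1 (-w) = t" using key[of "-w"] w \<open>w < 0\<close> by auto
    hence "-w = x" using m1_inj[of "-w" x] x w \<open>w<0\<close> by auto
    thus "w = -x" by simp
  qed
  thus ?thesis using x_def by simp
qed

lemma m1_deriv:
  assumes "t > 0"
  shows "(phi_inv phi_m1 has_real_derivative
           - (phi_inv phi_m1 t / (1 - phi_inv phi_m1 t))) (at t)"
proof -
  define W where "W = phi_inv phi_m1"
  define x where "x = W t"
  have x: "0 < x" "x < 1" "phi_m1 x = t"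
    using m1_inv[of t] m1_inv_lt1[OF assms] assms unfolding x_def W_def by auto
  define d where "d = min x (1 - x) / 2"
  have d: "d > 0" using x by (simp add: d_def)
  have zb: "0 < z \<and> z < 1" if "\<bar>z - x\<bar> \<le> d" for z
  proof -
    have "\<bar>z - x\<bar> \<le> x/2" "\<bar>z - x\<bar> \<le> (1-x)/2" using that unfolding d_def by (auto simp: min_def split: if_splits)
    hence z1: "0 < z" using x by arith
    have "z - x \<le> (1-x)/2" using \<open>\<bar>z - x\<bar> \<le> (1-x)/2\<close> by linarith
    hence z2: "z < 1" using \<open>x < 1\<close> by (simp add: field_simps)
    show ?thesis using z1 z2 by simp
  qed
  have "isCont W (phi_m1 x)"
  proof (rule isCont_inverse_function[OF d, where f=phi_m1 and g=W and x=x])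
    fix z assume "\<bar>z - x\<bar> \<le> d"
    note z = zb[OF this]
    show "W (phi_m1 z) = z" using z by (simp add: W_def m1_inv_eq)
  next
    fix z assume "\<bar>z - x\<bar> \<le> d"
    note z = zb[OF this]
    show "isCont phi_m1 z" unfolding phi_m1_def using z by (auto intro!: continuous_intros)
  qed
  hence cont: "isCont W t" using x by simp
  have der: "DERIV phi_m1 (W t) :> (1 - 1 / x)"
    unfolding phi_m1_def x_def[symmetric] using x
    by (auto intro!: derivative_eq_intros)
  have "DERIV W t :> inverse (1 - 1/x)"
  proof (rule DERIV_inverse_function[OF der _ _ _ _ cont])
    show "1 - 1/x \<noteq> 0" using x by simp
    show "0 < t" by fact
    show "t < t + 1" by simp
    fix y assume "0 < y" "y < t + 1"
    thus "phi_m1 (W y) = y" unfolding W_def using m1_inv[of y] by auto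
  qed
  moreover have "inverse (1 - 1/x) = - (x / (1 - x))" using x
    by (simp add: field_simps)
  ultimately show ?thesis unfolding W_def x_def by simp
qed



primrec Rp :: "nat \<Rightarrow> real poly" where
  "Rp 0 = [:0, 1:]"
| "Rp (Suc k) = pderiv (Rp k) * [:0, 1:] * [:1, 1:]^2"

lemma Rp_nonneg: "\<forall>n. coeff (Rp k) n \<ge> 0"
proof (induction k)
  case 0 show ?case by (simp add: coeff_pCons split: nat.splits)
next
  case (Suc k)
  have a: "\<forall>n. coeff ([:0, 1:] :: real poly) n \<ge> 0" by (simp add: coeff_pCons split: nat.splits)
  have b: "\<forall>n. coeff ([:1, 1:] :: real poly) n \<ge> 0" by (simp add: coeff_pCons split: nat.splits)
  have b2: "\<forall>n. coeff ([:1, 1:]^2 :: real poly) n \<ge> 0"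
    unfolding power2_eq_square by (rule nonneg_coeffs_mult[OF b b])
  show ?case
    by (simp only: Rp.simps) (intro nonneg_coeffs_mult nonneg_coeffs_pderiv Suc a b2)
qed

lemma alg1:
  fixes a w :: real
  assumes "a \<noteq> 0" "w = 1 - a"
  shows "(- (w / (1 - w)) * (1 - w) - w * (0 - - (w / (1 - w)))) / ((1 - w) * (1 - w))
         = - (w / (1 - w) * (1 + w / (1 - w))^2)"
proof -
  show ?thesis using assms(1) unfolding assms(2) by (simp add: field_simps power2_eq_square)
qed

lemma cm1: "completely_monotone_on {0..} (phi_inv phi_m1)"
proof -
  define W where "W = phi_inv phi_m1"
  define V where "V = (\<lambda>t. W t / (1 - W t))"
  have Wb: "0 < W t \<and> W t < 1" if "t > 0" for t
    using m1_inv[of t] m1_inv_lt1[of t] that unfolding W_def by auto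
  have Vpos: "V t > 0" if "t > 0" for t using Wb[OF that] by (simp add: V_def)
  have dW: "(W has_real_derivative - V t) (at t)" if "t > 0" for t
    using m1_deriv[OF that] unfolding W_def V_def by simp
  have dV: "(V has_real_derivative - (V t * (1 + V t)^2)) (at t)" if "t > 0" for t
  proof -
    have w: "0 < W t" "W t < 1" using Wb[OF that] by auto
    have "((\<lambda>t. W t / (1 - W t)) has_real_derivative
        (- V t * (1 - W t) - W t * (0 - - V t)) / ((1 - W t) * (1 - W t))) (at t)"
      by (rule DERIV_divide[OF dW[OF that] DERIV_diff[OF DERIV_const dW[OF that]]]) (use w in simp)
    hence "(V has_real_derivative (- V t * (1 - W t) - W t * (0 - - V t)) / ((1 - W t) * (1 - W t))) (at t)"
      by (simp add: V_def[symmetric])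
    moreover have "(- V t * (1 - W t) - W t * (0 - - V t)) / ((1 - W t) * (1 - W t)) = - (V t * (1 + V t)^2)"
      using alg1[of "1 - W t" "W t"] w by (simp add: V_def)
    ultimately show ?thesis by simp
  qed
  define D where "D = (\<lambda>k. if k = 0 then W else (\<lambda>t. (-1)^k * poly (Rp (k - 1)) (V t)))"
  show ?thesis
    unfolding completely_monotone_on_def
  proof (intro exI[of _ D] conjI ballI allI)
    fix x assume "x \<in> interior {0::real..}"
    thus "D 0 x = phi_inv phi_m1 x" by (simp add: D_def W_def)
  next
    fix k and t :: real assume "t \<in> interior {0..}"
    hence t: "t > 0" by simp
    show "(D k has_real_derivative D (Suc k) t) (at t)"
    proof (cases k)
      case 0
      then show ?thesis using dW[OF t] by (simp add: D_def)
    next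
      case (Suc m)
      have d1: "((\<lambda>t. (-1)^k * poly (Rp m) (V t)) has_real_derivative
             (-1)^k * (poly (pderiv (Rp m)) (V t) * (- (V t * (1 + V t)^2)))) (at t)"
        by (intro DERIV_cmult DERIV_chain2[OF poly_DERIV dV[OF t]])
      have eq: "(-1)^k * (poly (pderiv (Rp m)) (V t) * (- (V t * (1 + V t)^2)))
          = (-1)^(Suc k) * poly (Rp (Suc m)) (V t)"
        by (simp add: power2_eq_square algebra_simps)
      have "((\<lambda>t. (-1)^k * poly (Rp m) (V t)) has_real_derivative (-1)^(Suc k) * poly (Rp (Suc m)) (V t)) (at t)"
        using d1 unfolding eq .
      then show ?thesis using Suc by (simp add: D_def)
    qed
  next
    fix k and t :: real assume "t \<in> interior {0..}"
    hence t: "t > 0" by simp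
    show "(-1)^k * D k t \<ge> 0"
    proof (cases k)
      case 0
      then show ?thesis using Wb[OF t] by (simp add: D_def)
    next
      case (Suc m)
      have "poly (Rp m) (V t) \<ge> 0"
        using poly_nonneg_coeffs[OF Rp_nonneg] Vpos[OF t] by simp
      moreover have "(-1)^k * D k t = poly (Rp m) (V t)"
        using Suc by (simp add: D_def flip: power_add)
      ultimately show ?thesis by simp
    qed
  qed
qed



lemma m2_strict:
  assumes "0 < x" "x < y" "y \<le> 1"
  shows "phi_m2 y < phi_m2 x"
proof -
  have "x * y \<le> x" using assms by (simp add: mult_left_le)
  hence xy: "x * y < 1" "x * y > 0" using assms by (linarith, simp)
  have "y - x < (y - x) / (x * y)"
    using xy assms by (simp add: less_divide_eq)
  also have "(y - x) / (x * y) = inverse x - inverse y" using assms by (simp add: field_simps)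
  finally have "inverse y + y < inverse x + x" by simp
  thus ?thesis unfolding phi_m2_def by simp
qed

lemma m2_inj: "x \<in> {0<..1} \<Longrightarrow> y \<in> {0<..1} \<Longrightarrow> phi_m2 x = phi_m2 y \<Longrightarrow> x = y"
  by (metis greaterThanAtMost_iff linorder_neqE_linordered_idom m2_strict order_less_irrefl)

lemma m2_both:
  assumes "t \<ge> 0"
  shows "phi_inv phi_m2 t = t + 1 - sqrt ((t + 1)^2 - 1) \<and> phi_inv phi_m2 t \<in> {0<..1}"
proof -
  define s where "s = t + 1"
  define r where "r = sqrt (s^2 - 1)"
  have s1: "s \<ge> 1" using assms s_def by simp
  have r0: "r \<ge> 0" using s1 by (simp add: r_def)
  have r2: "r^2 = s^2 - 1" using s1 unfolding r_def by (simp add: power_le_one_iff one_le_power)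
  have "r < s"
  proof -
    have "r^2 < s^2" using r2 by simp
    thus ?thesis using r0 s1 by (intro power_less_imp_less_base[of r 2 s]) auto
  qed
  have "s - 1 \<le> r"
  proof -
    have "(s-1)^2 \<le> r^2" using r2 s1 by (simp add: power2_eq_square algebra_simps)
    thus ?thesis using r0 by (rule power2_le_imp_le)
  qed
  define x where "x = s - r"
  have x: "x \<in> {0<..1}" using \<open>r < s\<close> \<open>s - 1 \<le> r\<close> by (simp add: x_def)
  have "x * (s + r) = 1" unfolding x_def using r2 by (simp add: algebra_simps power2_eq_square)
  hence "inverse x = s + r" by (rule inverse_unique)
  hence px: "phi_m2 x = t" unfolding phi_m2_def x_def s_def by simp
  have "phi_inv phi_m2 t = x" unfolding phi_inv_def
    using x px m2_inj by (intro the_equality) auto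
  thus ?thesis using x unfolding x_def r_def s_def by simp
qed

lemma m2_formula: "t \<ge> 0 \<Longrightarrow> phi_inv phi_m2 t = t + 1 - sqrt ((t + 1)^2 - 1)"
  using m2_both by blast

lemma m2_range: "t \<ge> 0 \<Longrightarrow> phi_inv phi_m2 t \<in> {0<..1}"
  using m2_both by blast



definition Fp :: "real \<Rightarrow> nat \<Rightarrow> real \<Rightarrow> real" where
  "Fp c j t = (-1)^j * pochhammer (3/2) j * (t + c) powr (-3/2 - real j)"

lemma Fp_deriv:
  assumes "t + c > 0"
  shows "(Fp c j has_real_derivative Fp c (Suc j) t) (at t)"
proof -
  have "((\<lambda>t. (-1)^j * pochhammer (3/2) j * (t + c) powr (-3/2 - real j)) has_real_derivative
        (-1)^j * pochhammer (3/2) j * ((-3/2 - real j) * (t + c) powr (-3/2 - real j - 1) * 1)) (at t)"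
    by (intro DERIV_cmult DERIV_chain2[where f="\<lambda>z. z powr (-3/2 - real j)" and g="\<lambda>t. t + c", OF has_real_derivative_powr[OF assms]])
       (auto intro!: derivative_eq_intros)
  moreover have "(-1)^j * pochhammer (3/2) j * ((-3/2 - real j) * (t + c) powr (-3/2 - real j - 1) * 1)
       = Fp c (Suc j) t"
  proof -
    have e: "-3/2 - real j - 1 = -3/2 - real (Suc j)" by simp
    show ?thesis unfolding e Fp_def pochhammer_Suc power_Suc by (simp add: algebra_simps)
  qed
  ultimately show ?thesis unfolding Fp_def by simp
qed

lemma Fp_sign: "(-1)^j * Fp c j t \<ge> 0"
proof -
  have m: "(-1::real)^j * (-1)^j = 1" by (simp flip: power_mult_distrib)
  have "(-1)^j * Fp c j t = ((-1)^j * (-1)^j) * (pochhammer (3/2) j * (t + c) powr (-3/2 - real j))"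
    unfolding Fp_def by (simp only: mult.assoc)
  also have "\<dots> = pochhammer (3/2) j * (t + c) powr (-3/2 - real j)" unfolding m by simp
  also have "\<dots> \<ge> 0" by (intro mult_nonneg_nonneg pochhammer_nonneg) auto
  finally show ?thesis .
qed



lemma cm2: "completely_monotone_on {0..} (phi_inv phi_m2)"
proof -
  define L where "L = (\<lambda>k t. \<Sum>j\<le>k. real (k choose j) * Fp 0 j t * Fp 2 (k-j) t)"
  define D where "D = (\<lambda>k::nat. if k = 0 then phi_inv phi_m2
      else if k = 1 then (\<lambda>t. 1 - (t+1) * (t*(t+2)) powr (-1/2)) else L (k - 2))"
  have pos: "0 < t * (t + 2)" if "t > 0" for t :: real using that by simp
  have hp: "(t*(t+2)) powr (-1/2) = 1 / sqrt (t*(t+2))" if "t > 0" for t :: real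
    using pos[OF that] by (simp add: powr_minus_divide powr_half_sqrt)
  have d0: "(phi_inv phi_m2 has_real_derivative D 1 t) (at t)" if t: "t > 0" for t :: real
  proof -
    have dp: "((\<lambda>t. t*(t+2)) has_real_derivative (1 * (t+2) + (1 + 0) * t)) (at t)"
      by (intro DERIV_mult DERIV_ident DERIV_add DERIV_const)
    have ds: "((\<lambda>t. sqrt (t*(t+2))) has_real_derivative
           inverse (sqrt (t*(t+2))) / 2 * (1 * (t+2) + (1 + 0) * t)) (at t)"
      by (rule DERIV_chain2[where f=sqrt and g="\<lambda>t. t*(t+2)", OF DERIV_real_sqrt[OF pos[OF t]] dp])
    have "((\<lambda>t. t + 1 - sqrt (t*(t+2))) has_real_derivative
           1 + 0 - inverse (sqrt (t*(t+2))) / 2 * (1 * (t+2) + (1 + 0) * t)) (at t)"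
      by (intro DERIV_diff DERIV_add DERIV_ident DERIV_const ds)
    moreover have "1 + 0 - inverse (sqrt (t*(t+2))) / 2 * (1 * (t+2) + (1 + 0) * t) = D 1 t"
    proof -
      have sp: "sqrt (t*(t+2)) > 0" using pos[OF t] by simp
      have e: "D 1 t = 1 - (t+1) * (1 / sqrt (t*(t+2)))" using hp[OF t] by (simp add: D_def)
      show ?thesis unfolding e using sp by (simp add: field_simps)
    qed
    ultimately have "((\<lambda>t. t + 1 - sqrt (t*(t+2))) has_real_derivative D 1 t) (at t)" by simp
    thus ?thesis
    proof (rule has_field_derivative_transform_within_open[where S="{0<..}"])
      fix y :: real assume "y \<in> {0<..}"
      thus "y + 1 - sqrt (y * (y + 2)) = phi_inv phi_m2 y"
        using m2_formula[of y] by (simp add: power2_eq_square algebra_simps)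
    qed (use t in auto)
  qed
  have d1: "(D 1 has_real_derivative D 2 t) (at t)" if t: "t > 0" for t :: real
  proof -
    define p where "p = t * (t + 2)"
    have p: "p > 0" using pos[OF t] p_def by simp
    have dp: "((\<lambda>t. t*(t+2)) has_real_derivative (1 * (t+2) + (1 + 0) * t)) (at t)"
      by (intro DERIV_mult DERIV_ident DERIV_add DERIV_const)
    have dpow: "((\<lambda>t. (t*(t+2)) powr (-1/2)) has_real_derivative
         ((-1/2) * (t*(t+2)) powr (-1/2 - 1)) * (1 * (t+2) + (1 + 0) * t)) (at t)"
      by (rule DERIV_chain2[where f="\<lambda>z. z powr (-1/2)" and g="\<lambda>t. t*(t+2)",
            OF has_real_derivative_powr[OF pos[OF t]] dp])
    have "((\<lambda>t. 1 - (t+1) * (t*(t+2)) powr (-1/2)) has_real_derivative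
         0 - ((1 + 0) * (t*(t+2)) powr (-1/2) + ((-1/2) * (t*(t+2)) powr (-1/2 - 1)) * (1 * (t+2) + (1 + 0) * t) * (t + 1))) (at t)"
      by (intro DERIV_diff DERIV_const DERIV_mult dpow DERIV_add DERIV_ident)
    moreover have "0 - ((1 + 0) * (t*(t+2)) powr (-1/2) + ((-1/2) * (t*(t+2)) powr (-1/2 - 1)) * (1 * (t+2) + (1 + 0) * t) * (t + 1))
        = D 2 t"
    proof -
      define q where "q = p powr (-3/2)"
      have "p powr (1 + (-3/2)) = p powr 1 * p powr (-3/2)" by (rule powr_add)
      hence e1: "(t*(t+2)) powr (-1/2) = p * q" unfolding q_def p_def[symmetric]
        using p by simp
      have e2: "(t*(t+2)) powr (-1/2 - 1) = q" unfolding q_def p_def by simp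
      have e3: "D 2 t = q" unfolding D_def L_def Fp_def q_def p_def using t
        by (simp add: powr_mult)
      show ?thesis unfolding e1 e2 e3 p_def by (simp add: algebra_simps power2_eq_square)
    qed
    ultimately show ?thesis by (simp add: D_def)
  qed
  have dk: "(D (Suc (Suc k)) has_real_derivative D (Suc (Suc (Suc k))) t) (at t)" if t: "t > 0" for t :: real and k
  proof -
    have "(L k has_real_derivative L (Suc k) t) (at t)"
      unfolding L_def
      by (rule leibniz_tower[where S="{0<..}"]) (use t in \<open>auto intro!: Fp_deriv\<close>)
    thus ?thesis by (simp add: D_def)
  qed
  show ?thesis
    unfolding completely_monotone_on_def
  proof (intro exI[of _ D] conjI ballI allI)
    fix x assume "x \<in> interior {0::real..}"
    thus "D 0 x = phi_inv phi_m2 x" by (simp add: D_def)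
  next
    fix k and t :: real assume "t \<in> interior {0..}"
    hence t: "t > 0" by simp
    show "(D k has_real_derivative D (Suc k) t) (at t)"
    proof (cases k)
      case 0 then show ?thesis using d0[OF t] by (simp add: D_def)
    next
      case (Suc m)
      show ?thesis
      proof (cases m)
        case 0 then show ?thesis using d1[OF t] Suc by (simp add: numeral_2_eq_2)
      next
        case (Suc n) then show ?thesis using dk[OF t, of n] \<open>k = Suc m\<close> by simp
      qed
    qed
  next
    fix k and t :: real assume "t \<in> interior {0..}"
    hence t: "t > 0" by simp
    show "(-1)^k * D k t \<ge> 0"
    proof (cases k)
      case 0
      then show ?thesis using m2_range[of t] t by (simp add: D_def)
    next
      case (Suc m)
      show ?thesis
      proof (cases m)
        case 0
        have "1 \<le> (t+1) * (t*(t+2)) powr (-1/2)"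
        proof -
          have "sqrt (t*(t+2)) \<le> t + 1"
            using t by (intro real_le_lsqrt) (auto simp: power2_eq_square algebra_simps)
          moreover have "sqrt (t*(t+2)) > 0" using pos[OF t] by simp
          ultimately show ?thesis unfolding hp[OF t] by (simp add: field_simps)
        qed
        then show ?thesis using Suc 0 by (simp add: D_def)
      next
        case (Suc n)
        have "(-1)^k * D k t = (-1)^n * L n t"
          using Suc \<open>k = Suc m\<close> by (simp add: D_def)
        also have "\<dots> = (\<Sum>j\<le>n. real (n choose j) * ((-1)^j * Fp 0 j t) * ((-1)^(n-j) * Fp 2 (n-j) t))"
          unfolding L_def sum_distrib_left
        proof (rule sum.cong[OF refl])
          fix j assume "j \<in> {..n}"
          hence "(-1::real)^n = (-1)^j * (-1)^(n-j)" by (simp flip: power_add)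
          thus "(-1)^n * (real (n choose j) * Fp 0 j t * Fp 2 (n - j) t) =
                real (n choose j) * ((-1)^j * Fp 0 j t) * ((-1)^(n-j) * Fp 2 (n-j) t)"
            by simp
        qed
        also have "\<dots> \<ge> 0"
          by (intro sum_nonneg mult_nonneg_nonneg Fp_sign) auto
        finally show ?thesis .
      qed
    qed
  qed
qed


theorem lemma4:
  shows "(\<forall>t\<ge>0. phi_inv phi_m1 t = - lambertW0 (- exp (-(t + 1))))
       \<and> completely_monotone_on {0..} (phi_inv phi_m1)
       \<and> (\<forall>t\<ge>0. phi_inv phi_m2 t = t + 1 - sqrt ((t + 1)^2 - 1))
       \<and> completely_monotone_on {0..} (phi_inv phi_m2)"
  using m1_lambert cm1 m2_formula cm2 by blast

end
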